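(* Let $a>0$, $\gamma>1$, $b>0$, and set $v_{1,1}=a$, $v_{2,1}=\gamma a$, $w_{1,1}=w_{2,1}=b$. Then $2\omega_-(\vartheta)\neq\omega_-(2\vartheta)$ for all $\vartheta\in(-\pi,\pi]$.
   Context: With $c_i:=2v_{i,1}+w_{i,1}$, for $\vartheta\in\mathbb R$ define $$\omega_\pm(\vartheta):=\sqrt{\tfrac12\Big(c_1+c_2\pm\sqrt{(c_1-c_2)^2+8v_{1,1}v_{2,1}(\cos\vartheta+1)}\Big)}.$$ *)

theory Defs
  imports Complex_Main
begin

definition omega_minus :: "real \<Rightarrow> real \<Rightarrow> real \<Rightarrow> real \<Rightarrow> real \<Rightarrow> real" where
  "omega_minus v11 v21 w11 w21 \<theta> =
     (let c1 = 2 * v11 + w11; c2 = 2 * v21 + w21 in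
      sqrt ((1/2) * (c1 + c2 - sqrt ((c1 - c2)^2 + 8 * v11 * v21 * (cos \<theta> + 1)))))"

definition omega_plus :: "real \<Rightarrow> real \<Rightarrow> real \<Rightarrow> real \<Rightarrow> real \<Rightarrow> real" where
  "omega_plus v11 v21 w11 w21 \<theta> =
     (let c1 = 2 * v11 + w11; c2 = 2 * v21 + w21 in
      sqrt ((1/2) * (c1 + c2 + sqrt ((c1 - c2)^2 + 8 * v11 * v21 * (cos \<theta> + 1)))))"

end

theory Submission
  imports Defs
begin

lemma key:
  fixes d k x b :: real
  assumes d: "d \<ge> 0" and k: "k > 0" and x0: "0 \<le> x" and x2: "x \<le> 2"
  shows "4 * sqrt (d^2 + k*x) \<le> 3 * sqrt (d^2 + 2*k) + sqrt (d^2 + 2*k*(x-1)^2)"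
proof -
  define s2 where "s2 = sqrt (d^2 + 2*k)"
  define sx where "sx = sqrt (d^2 + k*x)"
  define sy where "sy = sqrt (d^2 + 2*k*(x-1)^2)"
  have s2sq: "s2^2 = d^2 + 2*k" unfolding s2_def using k by (simp add: add_nonneg_nonneg)
  have sxsq: "sx^2 = d^2 + k*x" unfolding sx_def using k x0 by simp
  have sysq: "sy^2 = d^2 + 2*k*(x-1)^2" unfolding sy_def using k by simp
  have s2p: "s2 > 0" unfolding s2_def using k by (simp add: add_nonneg_pos)
  have sxn: "sx \<ge> 0" unfolding sx_def using k x0 by simp
  have syn: "sy \<ge> 0" unfolding sy_def using k by simp
  have sxs2: "sx \<le> s2" unfolding sx_def s2_def using k x2 by (simp add: real_sqrt_le_iff)
  have A: "(x-1)*sx \<le> sy"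
  proof (cases "x \<le> 1")
    case True have "(x-1)*sx \<le> 0" using True sxn by (simp add: mult_nonpos_nonneg) thus ?thesis using syn by linarith
  next
    case False
    have "((x-1)*sx)^2 \<le> sy^2"
    proof -
      have "((x-1)*sx)^2 = (x-1)^2*(d^2+k*x)" by (simp add: power_mult_distrib sxsq)
      also have "\<dots> \<le> d^2 + 2*k*(x-1)^2"
      proof -
        have h1: "(x-1)^2 \<le> 1" using False x2 by (intro power_le_one) auto
        have "(x-1)^2*d^2 \<le> d^2" using h1 by (simp add: mult_left_le_one_le)
        moreover have "(x-1)^2*(k*x) \<le> (x-1)^2*(2*k)" using k x2 by (intro mult_left_mono) auto
        ultimately show ?thesis by (simp add: algebra_simps)
      qed
      finally show ?thesis by (simp add: sysq)
    qed
    thus ?thesis using syn by (rule power2_le_imp_le)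
  qed
  have B: "x*(s2+sx) \<le> 2*(s2+sy)"
  proof -
    have "(2-x)*sx \<le> (2-x)*s2" using x2 sxs2 by (intro mult_left_mono) auto
    thus ?thesis using A by (simp add: algebra_simps)
  qed
  have e1: "(s2 - sx)*(s2+sx) = k*(2-x)" using s2sq sxsq by (simp add: algebra_simps power2_eq_square)
  have e2: "(s2 - sy)*(s2+sy) = 2*k*x*(2-x)" using s2sq sysq by (simp add: algebra_simps power2_eq_square)
  have p1: "s2+sx > 0" "s2+sy > 0" using s2p sxn syn by auto
  have "s2 - sy = 2*k*x*(2-x)/(s2+sy)" using e2 p1 by (simp add: field_simps)
  also have "\<dots> \<le> 4*k*(2-x)/(s2+sx)"
  proof -
    have "2*k*x*(2-x)*(s2+sx) \<le> 4*k*(2-x)*(s2+sy)"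
    proof -
      have "(2*k*(2-x))*(x*(s2+sx)) \<le> (2*k*(2-x))*(2*(s2+sy))"
        using B k x2 by (intro mult_left_mono) auto
      thus ?thesis by (simp add: algebra_simps)
    qed
    thus ?thesis using p1 by (simp add: divide_simps)
  qed
  also have "\<dots> = 4*(s2 - sx)" using e1 p1 by (simp add: field_simps)
  finally have "4*sx \<le> 3*s2+sy" by (smt (verit))
  thus ?thesis by (simp add: s2_def sx_def sy_def)
qed

lemma omega_form:
  fixes a g b t :: real
  shows "omega_minus a (g*a) b b t =
    sqrt ((2*a+2*g*a+2*b - sqrt ((2*a*(g-1))^2 + (8*a*(g*a))*(cos t + 1)))/2)"
proof -
  have "(2*a+b - (2*(g*a)+b))^2 = (2*a*(g-1))^2" by (simp add: algebra_simps power2_eq_square)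
  thus ?thesis unfolding omega_minus_def Let_def by (simp add: algebra_simps)
qed

theorem mainTheorem3:
  fixes a \<gamma> b :: real
  assumes "a > 0" and "\<gamma> > 1" and "b > 0"
  shows "\<forall>\<theta>\<in>{-pi<..pi}.
           2 * omega_minus a (\<gamma> * a) b b \<theta> \<noteq> omega_minus a (\<gamma> * a) b b (2 * \<theta>)"
proof
  fix t assume "t \<in> {-pi<..pi}"
  define d where "d = 2*a*(\<gamma>-1)"
  define k where "k = 8*a*(\<gamma>*a)"
  define x where "x = cos t + 1"
  define S where "S = 2*a+2*\<gamma>*a+2*b"
  have d0: "d \<ge> 0" unfolding d_def using assms by simp
  have k0: "k > 0" unfolding k_def using assms by simp
  have x0: "0 \<le> x" "x \<le> 2" unfolding x_def using cos_ge_minus_one[of t] cos_le_one[of t] by linarith+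
  have c2: "cos (2*t) + 1 = 2*(x-1)^2" unfolding x_def by (simp add: cos_double_cos)
  have "d^2 + 2*k = (2*a*(\<gamma>+1))^2" unfolding d_def k_def by (simp add: algebra_simps power2_eq_square)
  hence s2: "sqrt (d^2+2*k) = S - 2*b" unfolding S_def using assms by (simp add: algebra_simps)
  have K: "4 * sqrt (d^2 + k*x) \<le> 3 * sqrt (d^2 + 2*k) + sqrt (d^2 + 2*k*(x-1)^2)"
    by (rule key[OF d0 k0 x0])
  have sxle: "sqrt (d^2 + k*x) \<le> sqrt (d^2+2*k)" using x0 k0 by (intro real_sqrt_le_mono) simp
  define u where "u = S - sqrt (d^2 + k*x)"
  define v where "v = S - sqrt (d^2 + k*(2*(x-1)^2))"
  have u0: "u \<ge> 2*b" unfolding u_def using sxle s2 by linarith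
  have uv: "4*u > v" unfolding u_def v_def using K s2 assms(3) by (simp add: algebra_simps) 
  have w1: "omega_minus a (\<gamma> * a) b b t = sqrt (u/2)"
    unfolding omega_form u_def S_def d_def k_def x_def by simp
  have w2: "omega_minus a (\<gamma> * a) b b (2*t) = sqrt (v/2)"
    unfolding omega_form v_def S_def d_def k_def c2[symmetric] by simp
  have "2 * sqrt (u/2) = sqrt (4*(u/2))" by (subst real_sqrt_mult) simp
  also have "\<dots> > sqrt (v/2)" using uv by simp
  finally show "2 * omega_minus a (\<gamma> * a) b b t \<noteq> omega_minus a (\<gamma> * a) b b (2 * t)"
    using w1 w2 by simp
qed

end
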